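(* Let $t$ be a $\mu$-term over the finite alphabet $X$ and let $(x_n,y_n)_n$ be a factorization sequence for $t$. Then each of the sequences $(x_n)_n$ and $(y_n)_n$ has a subsequence converging in $(\overline{\Omega}_X\mathsf S)^1$ to the value in $\overline{\Omega}_X\mathsf S$ of a $\mu$-term (the empty term being allowed), i.e. to a $\mu$-word over $\mathsf S$.
   Context: $X$ is a finite alphabet, $\mathsf S$ is the pseudovariety of all finite semigroups and $\overline{\Omega}_X\mathsf S$ is the free profinite semigroup on $X$; $(\overline{\Omega}_X\mathsf S)^1$ is it with an identity adjoined (the empty word). $\widehat{\mathbb N}$ is the profinite completion of $(\mathbb N,+)$, and for $\alpha\in\widehat{\mathbb N}$ the $\alpha$-power $x\mapsto x^\alpha$ is the usual continuous unary operation on profinite semigroups. $\mu$ denotes the implicit signature consisting of binary multiplication together with all unary operations $x\mapsto x^\alpha$ with $\alpha\in\widehat{\mathbb N}\setminus\mathbb N$. A $\mu$-term is an element of the free algebra on $X$ in this signature with associative multiplication (the empty term is allowed); its value in $\overline{\Omega}_X\mathsf S$ is denoted $[t]_{\mathsf S}$, and a $\mu$-word over $\mathsf S$ is such a value. For each $\alpha\in\widehat{\mathbb N}$ a sequence $(\mathrm{Approx}_n(\alpha))_n$ of natural numbers converging to $\alpha$ is fixed, constant if $\alpha$ is finite and strictly increasing otherwise. For a $\mu$-term $t$, $\mathrm{Approx}_n(t)$ is the finite word obtained by recursively replacing each subterm $v^\alpha$ ($\alpha$ infinite) by $v^{\mathrm{Approx}_n(\alpha)}$. A factorization sequence for $t$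 is a sequence $(x_n,y_n)_n$ with $x_n\in X^*$, $y_n\in X^+$ and $x_ny_n=\mathrm{Approx}_n(t)$ for all $n$. *)

theory Defs
  imports Main
begin

text \<open>The infinite elements of the profinite completion of (N,+) are identified with
  compatible families of residues (the profinite integers): f m is the residue modulo m
  (for m > 0), compatible under divisibility; the value at 0 is normalised to 0.\<close>

typedef zhat = "{f :: nat \<Rightarrow> nat. f 0 = 0 \<and> (\<forall>m>0. f m < m) \<and>
    (\<forall>d m. 0 < d \<longrightarrow> 0 < m \<longrightarrow> d dvd m \<longrightarrow> f m mod d = f d)}"
  by (rule exI[of _ "\<lambda>_. 0"]) auto

text \<open>A sequence of naturals which is strictly increasing converges (in the profinite
  completion of N) to the infinite element alpha iff its residues modulo every m > 0 are
  eventually those of alpha.\<close>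

definition approx_ok :: "(zhat \<Rightarrow> nat \<Rightarrow> nat) \<Rightarrow> bool" where
  "approx_ok ap \<longleftrightarrow> (\<forall>\<alpha>. strict_mono (ap \<alpha>) \<and>
      (\<forall>m>0. \<forall>\<^sub>F n in sequentially. ap \<alpha> n mod m = Rep_zhat \<alpha> m))"

text \<open>Multiplication is associative, so a mu-term is a (possibly empty) list of factors,
  each factor a letter or an omega-like power (with infinite exponent) of a mu-term.\<close>

datatype 'a mu = MLet 'a | MPow "'a mu list" zhat

type_synonym 'a muterm = "'a mu list"

primrec apx :: "(zhat \<Rightarrow> nat \<Rightarrow> nat) \<Rightarrow> nat \<Rightarrow> 'a mu \<Rightarrow> 'a list"
  and apxs :: "(zhat \<Rightarrow> nat \<Rightarrow> nat) \<Rightarrow> nat \<Rightarrow> 'a mu list \<Rightarrow> 'a list" where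
  "apx ap n (MLet a) = [a]"
| "apx ap n (MPow ts \<alpha>) = concat (replicate (ap \<alpha> n) (apxs ap n ts))"
| "apxs ap n [] = []"
| "apxs ap n (t # ts) = apx ap n t @ apxs ap n ts"

definition factorization_seq ::
  "(zhat \<Rightarrow> nat \<Rightarrow> nat) \<Rightarrow> 'a muterm \<Rightarrow> (nat \<Rightarrow> 'a list) \<Rightarrow> (nat \<Rightarrow> 'a list) \<Rightarrow> bool" where
  "factorization_seq ap t x y \<longleftrightarrow> (\<forall>n. y n \<noteq> [] \<and> x n @ y n = apxs ap n t)"

definition fin_cong :: "('a list \<times> 'a list) set \<Rightarrow> bool" where
  "fin_cong \<theta> \<longleftrightarrow> equiv UNIV \<theta> \<and> finite (UNIV // \<theta>) \<and>
     (\<forall>u v w z. (u, v) \<in> \<theta> \<longrightarrow> (w, z) \<in> \<theta> \<longrightarrow> (u @ w, v @ z) \<in> \<theta>)"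

text \<open>(Omega_X S)^1 = Omega_X M is the inverse limit of the finite monoids X^*/theta;
  an element is a compatible choice of a class for each finite-index congruence.\<close>
definition profinite_word :: "(('a list \<times> 'a list) set \<Rightarrow> 'a list set) \<Rightarrow> bool" where
  "profinite_word u \<longleftrightarrow> (\<forall>\<theta>. fin_cong \<theta> \<longrightarrow> u \<theta> \<in> UNIV // \<theta>) \<and>
     (\<forall>\<theta> \<theta>'. fin_cong \<theta> \<longrightarrow> fin_cong \<theta>' \<longrightarrow> \<theta> \<subseteq> \<theta>' \<longrightarrow> u \<theta> \<subseteq> u \<theta>')"

definition pconv :: "(nat \<Rightarrow> 'a list) \<Rightarrow> (('a list \<times> 'a list) set \<Rightarrow> 'a list set) \<Rightarrow> bool" where
  "pconv w u \<longleftrightarrow> (\<forall>\<theta>. fin_cong \<theta> \<longrightarrow> (\<forall>\<^sub>F n in sequentially. w n \<in> u \<theta>))"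

text \<open>Value of a mu-term in the finite monoid X^*/theta, via a representative word.
  With N = number of classes and m = N!, the power s^alpha in a finite monoid with N
  elements equals s^(m + (alpha mod m)) (index <= m, period divides m).\<close>
definition pow_exp :: "('a list \<times> 'a list) set \<Rightarrow> zhat \<Rightarrow> nat" where
  "pow_exp \<theta> \<alpha> = (let m = fact (card (UNIV // \<theta>)) in m + Rep_zhat \<alpha> m)"

primrec evw :: "('a list \<times> 'a list) set \<Rightarrow> 'a mu \<Rightarrow> 'a list"
  and evws :: "('a list \<times> 'a list) set \<Rightarrow> 'a mu list \<Rightarrow> 'a list" where
  "evw \<theta> (MLet a) = [a]"
| "evw \<theta> (MPow ts \<alpha>) = concat (replicate (pow_exp \<theta> \<alpha>) (evws \<theta> ts))"
| "evws \<theta> [] = []"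
| "evws \<theta> (t # ts) = evw \<theta> t @ evws \<theta> ts"

definition mu_value :: "'a muterm \<Rightarrow> ('a list \<times> 'a list) set \<Rightarrow> 'a list set" where
  "mu_value t = (\<lambda>\<theta>. \<theta> `` {evws \<theta> t})"

end

theory Submission
  imports Defs "HOL-Library.Diagonal_Subsequence" "HOL-Library.Infinite_Set"
begin

definition pw :: "'a list \<Rightarrow> nat \<Rightarrow> 'a list" where
  "pw v k = concat (replicate k v)"

lemma pw_add: "pw v (a + b) = pw v a @ pw v b"
  by (simp add: pw_def replicate_add)

lemma evws_append: "evws \<theta> (s @ s') = evws \<theta> s @ evws \<theta> s'"
  by (induct s) auto

lemma evws_rep: "evws \<theta> (concat (replicate c s)) = pw (evws \<theta> s) c"
  by (induct c) (auto simp: pw_def evws_append)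

lemma fc_refl: "fin_cong \<theta> \<Longrightarrow> (u, u) \<in> \<theta>"
  unfolding fin_cong_def equiv_def refl_on_def by auto

lemma fc_sym: "fin_cong \<theta> \<Longrightarrow> (u, v) \<in> \<theta> \<Longrightarrow> (v, u) \<in> \<theta>"
  unfolding fin_cong_def equiv_def by (auto dest: symD)

lemma fc_trans: "fin_cong \<theta> \<Longrightarrow> (u, v) \<in> \<theta> \<Longrightarrow> (v, w) \<in> \<theta> \<Longrightarrow> (u, w) \<in> \<theta>"
  unfolding fin_cong_def equiv_def by (auto dest: transD)

lemma fc_app: "fin_cong \<theta> \<Longrightarrow> (u, v) \<in> \<theta> \<Longrightarrow> (w, z) \<in> \<theta> \<Longrightarrow> (u @ w, v @ z) \<in> \<theta>"
  unfolding fin_cong_def by blast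

lemma fc_rep: "fin_cong \<theta> \<Longrightarrow> (u, v) \<in> \<theta> \<Longrightarrow> (pw u k, pw v k) \<in> \<theta>"
proof (induct k)
  case 0 then show ?case by (simp add: pw_def fc_refl)
next
  case (Suc k)
  then show ?case using fc_app[OF Suc(2,3) Suc(1)] by (simp add: pw_def)
qed

lemma fc_pow:
  assumes fc: "fin_cong \<theta>"
    and a: "card (UNIV // \<theta>) \<le> a" and b: "card (UNIV // \<theta>) \<le> b"
    and ab: "a mod fact (card (UNIV // \<theta>)) = b mod fact (card (UNIV // \<theta>))"
  shows "(pw v a, pw v b) \<in> \<theta>"
proof -
  define N where "N = card (UNIV // \<theta>)"
  have fin: "finite (UNIV // \<theta>)" using fc by (simp add: fin_cong_def)
  have eqv: "equiv UNIV \<theta>" using fc by (simp add: fin_cong_def)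
  have "\<not> inj_on (\<lambda>i. \<theta> `` {pw v i}) {0..N}"
  proof
    assume "inj_on (\<lambda>i. \<theta> `` {pw v i}) {0..N}"
    moreover have "(\<lambda>i. \<theta> `` {pw v i}) ` {0..N} \<subseteq> UNIV // \<theta>"
      by (auto intro: quotientI)
    ultimately have "card {0..N} \<le> card (UNIV // \<theta>)"
      using card_inj_on_le fin by blast
    then show False by (simp add: N_def)
  qed
  then obtain i0 j0 where ij0: "i0 \<le> N" "j0 \<le> N" "i0 \<noteq> j0"
      "\<theta> `` {pw v i0} = \<theta> `` {pw v j0}"
    unfolding inj_on_def by auto
  define i where "i = min i0 j0"
  define j where "j = max i0 j0"
  have ij: "i < j" "j \<le> N" "\<theta> `` {pw v i} = \<theta> `` {pw v j}"
    using ij0 unfolding i_def j_def by (auto simp: min_def max_def)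
  have rij: "(pw v i, pw v j) \<in> \<theta>"
    using ij(3) eq_equiv_class_iff[OF eqv] by blast
  have shift: "(pw v (i + k), pw v (j + k)) \<in> \<theta>" for k
    using fc_app[OF fc rij fc_refl[OF fc, of "pw v k"]] by (simp add: pw_add)
  define p where "p = j - i"
  have per: "i \<le> c \<Longrightarrow> (pw v c, pw v (c + q * p)) \<in> \<theta>" for c q
  proof (induct q)
    case 0 then show ?case by (simp add: fc_refl[OF fc])
  next
    case (Suc q)
    have e1: "i + (c + q * p - i) = c + q * p" using Suc(2) by simp
    have e2: "j + (c + q * p - i) = c + Suc q * p" using Suc(2) ij(1) by (simp add: p_def)
    have "(pw v (c + q * p), pw v (c + Suc q * p)) \<in> \<theta>"
      using shift[of "c + q * p - i"] unfolding e1 e2 .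
    then show ?case using fc_trans[OF fc Suc(1)[OF Suc(2)]] by blast
  qed
  have pd: "p dvd fact N" using ij by (intro dvd_fact) (auto simp: p_def)
  have gen: "N \<le> c \<Longrightarrow> c \<le> d \<Longrightarrow> c mod fact N = d mod fact N \<Longrightarrow> (pw v c, pw v d) \<in> \<theta>" for c d
  proof -
    assume h: "N \<le> c" "c \<le> d" "c mod fact N = d mod fact N"
    then have "fact N dvd d - c" using mod_eq_dvd_iff_nat[of c d "fact N"] by metis
    then have "p dvd d - c" using pd dvd_trans by blast
    then obtain q where "d - c = q * p" by (auto simp: dvd_def mult.commute)
    then have "d = c + q * p" using h by simp
    then show ?thesis using per[of c q] h ij by simp
  qed
  show ?thesis
  proof (cases "a \<le> b")
    case True then show ?thesis using gen a ab by (simp add: N_def)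
  next
    case False then show ?thesis using gen[of b a] b ab fc_sym[OF fc] by (simp add: N_def)
  qed
qed

lemma Rep_zhat_lt: "0 < m \<Longrightarrow> Rep_zhat \<beta> m < m"
  using Rep_zhat[of \<beta>] by auto

lemma pconv_sub: "strict_mono r \<Longrightarrow> pconv w u \<Longrightarrow> pconv (\<lambda>n. w (r n)) u"
  unfolding pconv_def using eventually_subseq by blast

lemma pconv_app:
  assumes "pconv w (mu_value s)" "pconv w' (mu_value s')"
  shows "pconv (\<lambda>n. w n @ w' n) (mu_value (s @ s'))"
  unfolding pconv_def
proof (intro allI impI)
  fix \<theta> :: "('a list \<times> 'a list) set" assume fc: "fin_cong \<theta>"
  have "\<forall>\<^sub>F n in sequentially. w n \<in> mu_value s \<theta> \<and> w' n \<in> mu_value s' \<theta>"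
    using assms fc unfolding pconv_def by (simp add: eventually_conj)
  then show "\<forall>\<^sub>F n in sequentially. w n @ w' n \<in> mu_value (s @ s') \<theta>"
    by (rule eventually_mono) (auto simp: mu_value_def evws_append intro: fc_app[OF fc])
qed

lemma pconv_nil: "pconv (\<lambda>n. []) (mu_value [])"
  by (auto simp: pconv_def mu_value_def fc_refl)

lemma pconv_let: "pconv (\<lambda>n. [a]) (mu_value [MLet a])"
  by (auto simp: pconv_def mu_value_def fc_refl)

lemma pconv_rep:
  assumes "pconv w (mu_value s)"
  shows "pconv (\<lambda>n. pw (w n) c) (mu_value (concat (replicate c s)))"
  unfolding pconv_def
proof (intro allI impI)
  fix \<theta> :: "('a list \<times> 'a list) set" assume fc: "fin_cong \<theta>"
  have "\<forall>\<^sub>F n in sequentially. w n \<in> mu_value s \<theta>"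
    using assms fc unfolding pconv_def by simp
  then show "\<forall>\<^sub>F n in sequentially. pw (w n) c \<in> mu_value (concat (replicate c s)) \<theta>"
    by (rule eventually_mono) (auto simp: mu_value_def evws_rep intro: fc_rep[OF fc])
qed

lemma pconv_pow:
  assumes w: "pconv w (mu_value s)"
    and big: "\<And>B. \<forall>\<^sub>F n in sequentially. B \<le> e n"
    and res: "\<And>m. 0 < m \<Longrightarrow> \<forall>\<^sub>F n in sequentially. e n mod m = Rep_zhat \<beta> m"
  shows "pconv (\<lambda>n. pw (w n) (e n)) (mu_value [MPow s \<beta>])"
  unfolding pconv_def
proof (intro allI impI)
  fix \<theta> :: "('a list \<times> 'a list) set" assume fc: "fin_cong \<theta>"
  define N where "N = card (UNIV // \<theta>)"
  define m :: nat where "m = fact N"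
  have m0: "0 < m" by (simp add: m_def)
  define E where "E = evws \<theta> s"
  have pe: "pow_exp \<theta> \<beta> = m + Rep_zhat \<beta> m"
    by (simp add: pow_exp_def m_def N_def Let_def)
  have "\<forall>\<^sub>F n in sequentially. w n \<in> mu_value s \<theta> \<and> N \<le> e n \<and> e n mod m = Rep_zhat \<beta> m"
    using w fc big res[OF m0] unfolding pconv_def by (simp add: eventually_conj)
  then show "\<forall>\<^sub>F n in sequentially. pw (w n) (e n) \<in> mu_value [MPow s \<beta>] \<theta>"
  proof (rule eventually_mono)
    fix n assume h: "w n \<in> mu_value s \<theta> \<and> N \<le> e n \<and> e n mod m = Rep_zhat \<beta> m"
    have r1: "(E, w n) \<in> \<theta>" using h by (simp add: mu_value_def E_def)
    have Nm: "N \<le> m" by (simp add: m_def fact_ge_self)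
    have md: "(m + Rep_zhat \<beta> m) mod m = Rep_zhat \<beta> m"
      using Rep_zhat_lt[OF m0] by simp
    have r2: "(pw E (pow_exp \<theta> \<beta>), pw E (e n)) \<in> \<theta>"
      unfolding pe using fc_pow[OF fc, of "m + Rep_zhat \<beta> m" "e n" E] h Nm md
      by (simp add: N_def m_def)
    have r3: "(pw E (e n), pw (w n) (e n)) \<in> \<theta>" using fc_rep[OF fc r1] .
    show "pw (w n) (e n) \<in> mu_value [MPow s \<beta>] \<theta>"
      using fc_trans[OF fc r2 r3] by (simp add: mu_value_def E_def pw_def)
  qed
qed


lemma pconv_apx:
  assumes ap: "approx_ok ap" and tau: "strict_mono \<tau>"
  shows "pconv (\<lambda>n. apx ap (\<tau> n) a) (mu_value [a])"
proof (induct a)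
  case (MLet x) then show ?case using pconv_let by simp
next
  case (MPow ts \<alpha>)
  have L: "pconv (\<lambda>n. apxs ap (\<tau> n) ts) (mu_value ts)"
    using MPow
  proof (induct ts)
    case Nil then show ?case using pconv_nil by simp
  next
    case (Cons b ts)
    have h1: "pconv (\<lambda>n. apx ap (\<tau> n) b) (mu_value [b])" using Cons.prems by simp
    have h2: "pconv (\<lambda>n. apxs ap (\<tau> n) ts) (mu_value ts)" using Cons.hyps Cons.prems by simp
    show ?case using pconv_app[OF h1 h2] by simp
  qed
  have sm: "strict_mono (ap \<alpha> \<circ> \<tau>)"
    using ap tau unfolding approx_ok_def by (blast intro: strict_mono_o)
  have big: "\<forall>\<^sub>F n in sequentially. B \<le> ap \<alpha> (\<tau> n)" for B
  proof -
    have "\<forall>\<^sub>F n in sequentially. B \<le> n" by (rule eventually_ge_at_top)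
    then show ?thesis by (rule eventually_mono) (metis comp_apply le_trans seq_suble[OF sm])
  qed
  have res: "\<forall>\<^sub>F n in sequentially. ap \<alpha> (\<tau> n) mod m = Rep_zhat \<alpha> m" if "0 < m" for m
  proof -
    have "\<forall>\<^sub>F n in sequentially. ap \<alpha> n mod m = Rep_zhat \<alpha> m"
      using ap that unfolding approx_ok_def by blast
    then show ?thesis using eventually_subseq[OF tau] by blast
  qed
  have "pconv (\<lambda>n. pw (apxs ap (\<tau> n) ts) (ap \<alpha> (\<tau> n))) (mu_value [MPow ts \<alpha>])"
    by (rule pconv_pow[OF L big res])
  then show ?case by (simp add: pw_def)
qed

lemma pconv_apxs:
  assumes ap: "approx_ok ap" and tau: "strict_mono \<tau>"
  shows "pconv (\<lambda>n. apxs ap (\<tau> n) ts) (mu_value ts)"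
proof (induct ts)
  case Nil then show ?case using pconv_nil by simp
next
  case (Cons b ts)
  show ?case using pconv_app[OF pconv_apx[OF ap tau, of b] Cons] by simp
qed

lemma freq_subseq:
  assumes "\<exists>\<^sub>F n in sequentially. P n"
  shows "\<exists>r::nat\<Rightarrow>nat. strict_mono r \<and> (\<forall>n. P (r n))"
proof -
  have "infinite {n. P n}"
    using assms frequently_cofinite[of P] cofinite_eq_sequentially by metis
  from infinite_enumerate[OF this] show ?thesis by simp
qed

lemma freq_cases:
  assumes "\<And>n. P n \<or> Q n"
  shows "(\<exists>\<^sub>F n in sequentially. P n) \<or> (\<exists>\<^sub>F n in sequentially. Q n)"
proof -
  have "\<forall>\<^sub>F n in sequentially. P n \<or> Q n"
    using assms by (intro always_eventually allI) blast
  then have "\<exists>\<^sub>F n in sequentially. P n \<or> Q n"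
    by (metis eventually_frequently trivial_limit_sequentially)
  then show ?thesis by (simp add: frequently_disj_iff)
qed

lemma finite_range_freq:
  assumes "finite (range f)"
  shows "\<exists>c. \<exists>\<^sub>F n in sequentially. f n = c"
proof (rule ccontr)
  assume "\<not> ?thesis"
  then have "\<forall>c\<in>range f. \<forall>\<^sub>F n in sequentially. f n \<noteq> c"
    by (auto simp: not_frequently)
  then have "\<forall>\<^sub>F n in sequentially. \<forall>c\<in>range f. f n \<noteq> c"
    by (rule eventually_ball_finite[OF assms])
  then have "\<forall>\<^sub>F n in sequentially. False" by (rule eventually_mono) auto
  then show False by simp
qed


lemma sm_comp: "strict_mono f \<Longrightarrow> strict_mono g \<Longrightarrow> strict_mono (\<lambda>n. f (g n))"
  by (simp add: strict_mono_def)

lemma exp_subseq: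
  fixes e :: "nat \<Rightarrow> nat"
  shows "\<exists>\<sigma>::nat\<Rightarrow>nat. strict_mono \<sigma> \<and> ((\<exists>c. \<forall>n. e (\<sigma> n) = c) \<or>
     (\<exists>\<beta>. (\<forall>B. \<forall>\<^sub>F n in sequentially. B \<le> e (\<sigma> n)) \<and>
           (\<forall>m>0. \<forall>\<^sub>F n in sequentially. e (\<sigma> n) mod m = Rep_zhat \<beta> m)))"
proof (cases "\<exists>c. \<exists>\<^sub>F n in sequentially. e n = c")
  case True
  then obtain c where "\<exists>\<^sub>F n in sequentially. e n = c" by blast
  from freq_subseq[OF this] obtain r :: "nat \<Rightarrow> nat" where r1: "strict_mono r" and r2: "\<forall>n. e (r n) = c" by blast
  show ?thesis apply (rule exI[of _ r]) using r1 r2 by blast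
next
  case False
  have big: "\<forall>\<^sub>F n in sequentially. B \<le> e n" for B
  proof -
    have "\<forall>c\<in>{..<B}. \<forall>\<^sub>F n in sequentially. e n \<noteq> c"
      using False by (auto simp: not_frequently)
    then have "\<forall>\<^sub>F n in sequentially. \<forall>c\<in>{..<B}. e n \<noteq> c"
      by (rule eventually_ball_finite[OF finite_lessThan])
    then show ?thesis by (rule eventually_mono) (metis lessThan_iff not_le)
  qed
  define P where "P = (\<lambda>k (s::nat \<Rightarrow> nat). \<exists>c. \<forall>n. e (s n) mod fact (Suc k) = c)"
  interpret D: subseqs P
  proof
    fix k and s :: "nat \<Rightarrow> nat" assume "strict_mono s"
    have "range (\<lambda>n. e (s n) mod fact (Suc k)) \<subseteq> {..<fact (Suc k)}"
      by (auto intro: mod_less_divisor)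
    then have "finite (range (\<lambda>n. e (s n) mod fact (Suc k)))"
      using finite_subset by blast
    then obtain c where "\<exists>\<^sub>F n in sequentially. e (s n) mod fact (Suc k) = c"
      using finite_range_freq by blast
    then obtain r :: "nat \<Rightarrow> nat" where "strict_mono r" "\<forall>n. e (s (r n)) mod fact (Suc k) = c"
      using freq_subseq[of "\<lambda>n. e (s n) mod fact (Suc k) = c"] by blast
    then show "\<exists>r'. strict_mono r' \<and> P k (s \<circ> r')"
      unfolding P_def by auto
  qed
  define d where "d = D.diagseq"
  have sd: "strict_mono d" unfolding d_def by (rule D.subseq_diagseq)
  have dh: "P k (d \<circ> (+) (Suc k))" for k
    unfolding d_def by (rule D.diagseq_holds) (auto simp: P_def)
  have hm: "e (d n) mod m = e (d (Suc m)) mod m" if "0 < m" "Suc m \<le> n" for m n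
  proof -
    obtain c where c: "\<And>n. e (d (Suc m + n)) mod fact (Suc m) = c"
      using dh[of m] unfolding P_def by auto
    have dv: "m dvd fact (Suc m)" using that by (intro dvd_fact) auto
    have "e (d (Suc m + (n - Suc m))) mod m = c mod m"
      using c[of "n - Suc m"] mod_mod_cancel[OF dv] by metis
    moreover have "e (d (Suc m + 0)) mod m = c mod m"
      using c[of 0] mod_mod_cancel[OF dv] by metis
    ultimately show ?thesis using that by simp
  qed
  define g where "g m = (if m = 0 then 0 else e (d (Suc m)) mod m)" for m
  have gz: "g \<in> {f :: nat \<Rightarrow> nat. f 0 = 0 \<and> (\<forall>m>0. f m < m) \<and>
    (\<forall>d m. 0 < d \<longrightarrow> 0 < m \<longrightarrow> d dvd m \<longrightarrow> f m mod d = f d)}"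
  proof (simp, intro conjI allI impI)
    show "g 0 = 0" by (simp add: g_def)
  next
    fix m :: nat assume "0 < m" then show "g m < m" by (simp add: g_def)
  next
    fix d' m :: nat assume h: "0 < d'" "0 < m" "d' dvd m"
    define n where "n = Suc m + Suc d'"
    have "g m = e (d n) mod m" using hm[of m n] h by (simp add: g_def n_def)
    moreover have "g d' = e (d n) mod d'" using hm[of d' n] h by (simp add: g_def n_def)
    ultimately show "g m mod d' = g d'" using mod_mod_cancel[OF h(3)] by simp
  qed
  define \<beta> where "\<beta> = Abs_zhat g"
  have Rb: "Rep_zhat \<beta> = g" unfolding \<beta>_def using Abs_zhat_inverse[OF gz] .
  have r1: "\<forall>B. \<forall>\<^sub>F n in sequentially. B \<le> e (d n)"
  proof
    fix B show "\<forall>\<^sub>F n in sequentially. B \<le> e (d n)"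
      using eventually_subseq[OF sd big[of B]] by simp
  qed
  have r2: "\<forall>m>0. \<forall>\<^sub>F n in sequentially. e (d n) mod m = Rep_zhat \<beta> m"
  proof (intro allI impI)
    fix m :: nat assume m: "0 < m"
    have "\<forall>\<^sub>F n in sequentially. Suc m \<le> n" by (rule eventually_ge_at_top)
    moreover have RR: "Rep_zhat \<beta> m = e (d (Suc m)) mod m" using m by (simp add: Rb g_def)
    ultimately show "\<forall>\<^sub>F n in sequentially. e (d n) mod m = Rep_zhat \<beta> m"
      by (elim eventually_mono) (metis hm m RR)
  qed
  have X: "\<exists>\<beta>. (\<forall>B. \<forall>\<^sub>F n in sequentially. B \<le> e (d n)) \<and>
           (\<forall>m>0. \<forall>\<^sub>F n in sequentially. e (d n) mod m = Rep_zhat \<beta> m)"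
    by (rule exI[of _ \<beta>]) (rule conjI[OF r1 r2])
  show ?thesis by (intro exI[of _ d] conjI disjI2 sd X)
qed

lemma pconv_powseq:
  assumes w: "pconv w (mu_value s)"
  shows "\<exists>(\<sigma>::nat\<Rightarrow>nat) s'. strict_mono \<sigma> \<and> pconv (\<lambda>n. pw (w (\<sigma> n)) (e (\<sigma> n))) (mu_value s')"
proof -
  obtain \<sigma> :: "nat \<Rightarrow> nat" where s: "strict_mono \<sigma>" and cs: "(\<exists>c. \<forall>n. e (\<sigma> n) = c) \<or>
     (\<exists>\<beta>. (\<forall>B. \<forall>\<^sub>F n in sequentially. B \<le> e (\<sigma> n)) \<and>
           (\<forall>m>0. \<forall>\<^sub>F n in sequentially. e (\<sigma> n) mod m = Rep_zhat \<beta> m))"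
    using exp_subseq[of e] by blast
  have w': "pconv (\<lambda>n. w (\<sigma> n)) (mu_value s)" using pconv_sub[OF s w] .
  from cs show ?thesis
  proof
    assume "\<exists>c. \<forall>n. e (\<sigma> n) = c"
    then obtain c where c: "\<And>n. e (\<sigma> n) = c" by blast
    have "pconv (\<lambda>n. pw (w (\<sigma> n)) c) (mu_value (concat (replicate c s)))"
      by (rule pconv_rep[OF w'])
    moreover have "(\<lambda>n. pw (w (\<sigma> n)) (e (\<sigma> n))) = (\<lambda>n. pw (w (\<sigma> n)) c)"
      by (simp add: c)
    ultimately show ?thesis using s by metis
  next
    assume "\<exists>\<beta>. (\<forall>B. \<forall>\<^sub>F n in sequentially. B \<le> e (\<sigma> n)) \<and>
           (\<forall>m>0. \<forall>\<^sub>F n in sequentially. e (\<sigma> n) mod m = Rep_zhat \<beta> m)"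
    then obtain \<beta> where b1: "\<And>B. \<forall>\<^sub>F n in sequentially. B \<le> e (\<sigma> n)"
      and b2: "\<And>m. 0 < m \<Longrightarrow> \<forall>\<^sub>F n in sequentially. e (\<sigma> n) mod m = Rep_zhat \<beta> m" by blast
    show ?thesis using pconv_pow[OF w' b1 b2] s by blast
  qed
qed


definition FSP :: "(nat \<Rightarrow> 'a list) \<Rightarrow> bool" where
  "FSP A \<longleftrightarrow> (\<forall>(\<tau>::nat\<Rightarrow>nat) x y. strict_mono \<tau> \<longrightarrow> (\<forall>n. x n @ y n = A (\<tau> n)) \<longrightarrow>
     (\<exists>(\<sigma>::nat\<Rightarrow>nat) s s'. strict_mono \<sigma> \<and> pconv (\<lambda>n. x (\<sigma> n)) (mu_value s) \<and>
        pconv (\<lambda>n. y (\<sigma> n)) (mu_value s')))"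

lemma FSP_nil: "FSP (\<lambda>k. [])"
  unfolding FSP_def
proof (intro allI impI)
  fix \<tau> :: "nat \<Rightarrow> nat" and x y :: "nat \<Rightarrow> 'a list"
  assume "\<forall>n. x n @ y n = []"
  then have ex: "(\<lambda>n. x (id n)) = (\<lambda>n. [])" "(\<lambda>n. y (id n)) = (\<lambda>n. [])" by auto
  show "\<exists>(\<sigma>::nat\<Rightarrow>nat) s s'. strict_mono \<sigma> \<and> pconv (\<lambda>n. x (\<sigma> n)) (mu_value s) \<and>
        pconv (\<lambda>n. y (\<sigma> n)) (mu_value s')"
    apply (rule exI[of _ id], rule exI[of _ "[]"], rule exI[of _ "[]"])
    unfolding ex by (simp add: strict_mono_def pconv_nil)
qed

lemma FSP_let: "FSP (\<lambda>k. [a])"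
  unfolding FSP_def
proof (intro allI impI)
  fix \<tau> :: "nat \<Rightarrow> nat" and x y :: "nat \<Rightarrow> 'a list"
  assume xy: "\<forall>n. x n @ y n = [a]"
  have "\<And>n. (x n = [] \<and> y n = [a]) \<or> (x n = [a] \<and> y n = [])"
  proof -
    fix n show "(x n = [] \<and> y n = [a]) \<or> (x n = [a] \<and> y n = [])"
      using xy[rule_format, of n] by (cases "x n") auto
  qed
  from freq_cases[OF this]
  show "\<exists>(\<sigma>::nat\<Rightarrow>nat) s s'. strict_mono \<sigma> \<and> pconv (\<lambda>n. x (\<sigma> n)) (mu_value s) \<and>
        pconv (\<lambda>n. y (\<sigma> n)) (mu_value s')"
  proof
    assume "\<exists>\<^sub>F n in sequentially. x n = [] \<and> y n = [a]"
    from freq_subseq[OF this] obtain r :: "nat \<Rightarrow> nat" where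
      r: "strict_mono r" "\<forall>n. x (r n) = [] \<and> y (r n) = [a]" by blast
    then have ex: "(\<lambda>n. x (r n)) = (\<lambda>n. [])" "(\<lambda>n. y (r n)) = (\<lambda>n. [a])" by auto
    show ?thesis
      apply (rule exI[of _ r], rule exI[of _ "[]"], rule exI[of _ "[MLet a]"])
      unfolding ex using r(1) by (simp add: pconv_nil pconv_let)
  next
    assume "\<exists>\<^sub>F n in sequentially. x n = [a] \<and> y n = []"
    from freq_subseq[OF this] obtain r :: "nat \<Rightarrow> nat" where
      r: "strict_mono r" "\<forall>n. x (r n) = [a] \<and> y (r n) = []" by blast
    then have ex: "(\<lambda>n. x (r n)) = (\<lambda>n. [a])" "(\<lambda>n. y (r n)) = (\<lambda>n. [])" by auto
    show ?thesis
      apply (rule exI[of _ r], rule exI[of _ "[MLet a]"], rule exI[of _ "[]"])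
      unfolding ex using r(1) by (simp add: pconv_nil pconv_let)
  qed
qed

lemma FSP_cons:
  assumes FA: "FSP A" and FB: "FSP B"
    and PA: "\<And>\<tau>. strict_mono \<tau> \<Longrightarrow> pconv (\<lambda>n. A (\<tau> n)) (mu_value sa)"
    and PB: "\<And>\<tau>. strict_mono \<tau> \<Longrightarrow> pconv (\<lambda>n. B (\<tau> n)) (mu_value sb)"
  shows "FSP (\<lambda>k. A k @ B k)"
  unfolding FSP_def
proof (intro allI impI)
  fix \<tau> :: "nat \<Rightarrow> nat" and x y :: "nat \<Rightarrow> 'a list"
  assume tau: "strict_mono \<tau>" and xy: "\<forall>n. x n @ y n = A (\<tau> n) @ B (\<tau> n)"
  have "\<And>n. (\<exists>z. A (\<tau> n) = x n @ z \<and> y n = z @ B (\<tau> n)) \<or>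
             (\<exists>z. x n = A (\<tau> n) @ z \<and> B (\<tau> n) = z @ y n)"
    using xy unfolding append_eq_append_conv2 by metis
  from freq_cases[OF this]
  show "\<exists>(\<sigma>::nat\<Rightarrow>nat) s s'. strict_mono \<sigma> \<and> pconv (\<lambda>n. x (\<sigma> n)) (mu_value s) \<and>
        pconv (\<lambda>n. y (\<sigma> n)) (mu_value s')"
  proof
    assume "\<exists>\<^sub>F n in sequentially. \<exists>z. A (\<tau> n) = x n @ z \<and> y n = z @ B (\<tau> n)"
    from freq_subseq[OF this] obtain r :: "nat \<Rightarrow> nat" where
      r: "strict_mono r" "\<forall>n. \<exists>z. A (\<tau> (r n)) = x (r n) @ z \<and> y (r n) = z @ B (\<tau> (r n))"
      by blast
    from r(2) obtain z where z: "\<And>n. A (\<tau> (r n)) = x (r n) @ z n \<and> y (r n) = z n @ B (\<tau> (r n))"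
      by metis
    have tr: "strict_mono (\<lambda>n. \<tau> (r n))" using sm_comp[OF tau r(1)] .
    obtain \<sigma> :: "nat \<Rightarrow> nat" and s s' where
      \<sigma>: "strict_mono \<sigma>" and c1: "pconv (\<lambda>n. x (r (\<sigma> n))) (mu_value s)"
      and c2: "pconv (\<lambda>n. z (\<sigma> n)) (mu_value s')"
      using FA[unfolded FSP_def, rule_format, OF tr, of "\<lambda>n. x (r n)" z] z by metis
    have c3: "pconv (\<lambda>n. B (\<tau> (r (\<sigma> n)))) (mu_value sb)"
      using PB[OF sm_comp[OF tr \<sigma>]] .
    have c4: "pconv (\<lambda>n. z (\<sigma> n) @ B (\<tau> (r (\<sigma> n)))) (mu_value (s' @ sb))"
      by (rule pconv_app[OF c2 c3])
    have ey: "(\<lambda>n. y (r (\<sigma> n))) = (\<lambda>n. z (\<sigma> n) @ B (\<tau> (r (\<sigma> n))))"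
      using z by auto
    show ?thesis
      apply (rule exI[of _ "\<lambda>n. r (\<sigma> n)"], rule exI[of _ s], rule exI[of _ "s' @ sb"])
      using sm_comp[OF r(1) \<sigma>] c1 c4 ey by simp
  next
    assume "\<exists>\<^sub>F n in sequentially. \<exists>z. x n = A (\<tau> n) @ z \<and> B (\<tau> n) = z @ y n"
    from freq_subseq[OF this] obtain r :: "nat \<Rightarrow> nat" where
      r: "strict_mono r" "\<forall>n. \<exists>z. x (r n) = A (\<tau> (r n)) @ z \<and> B (\<tau> (r n)) = z @ y (r n)"
      by blast
    from r(2) obtain z where z: "\<And>n. x (r n) = A (\<tau> (r n)) @ z n \<and> B (\<tau> (r n)) = z n @ y (r n)"
      by metis
    have tr: "strict_mono (\<lambda>n. \<tau> (r n))" using sm_comp[OF tau r(1)] .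
    obtain \<sigma> :: "nat \<Rightarrow> nat" and s s' where
      \<sigma>: "strict_mono \<sigma>" and c1: "pconv (\<lambda>n. z (\<sigma> n)) (mu_value s)"
      and c2: "pconv (\<lambda>n. y (r (\<sigma> n))) (mu_value s')"
      using FB[unfolded FSP_def, rule_format, OF tr, of z "\<lambda>n. y (r n)"] z by metis
    have c3: "pconv (\<lambda>n. A (\<tau> (r (\<sigma> n)))) (mu_value sa)"
      using PA[OF sm_comp[OF tr \<sigma>]] .
    have c4: "pconv (\<lambda>n. A (\<tau> (r (\<sigma> n))) @ z (\<sigma> n)) (mu_value (sa @ s))"
      by (rule pconv_app[OF c3 c1])
    have ex: "(\<lambda>n. x (r (\<sigma> n))) = (\<lambda>n. A (\<tau> (r (\<sigma> n))) @ z (\<sigma> n))"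
      using z by auto
    show ?thesis
      apply (rule exI[of _ "\<lambda>n. r (\<sigma> n)"], rule exI[of _ "sa @ s"], rule exI[of _ s'])
      using sm_comp[OF r(1) \<sigma>] c2 c4 ex by simp
  qed
qed

lemma decomp:
  "0 < k \<Longrightarrow> x @ y = pw v k \<Longrightarrow>
   \<exists>i j x' y'. x = pw v i @ x' \<and> y = y' @ pw v j \<and> x' @ y' = v"
proof (induct k arbitrary: x y)
  case 0 then show ?case by simp
next
  case (Suc k)
  have "x @ y = v @ pw v k" using Suc(3) by (simp add: pw_def)
  then obtain us where us: "(x = v @ us \<and> us @ y = pw v k) \<or> (x @ us = v \<and> y = us @ pw v k)"
    unfolding append_eq_append_conv2 by blast
  then show ?case
  proof
    assume h: "x = v @ us \<and> us @ y = pw v k"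
    show ?case
    proof (cases "k = 0")
      case True
      then have "us = []" "y = []" using h by (auto simp: pw_def)
      then have "x = pw v 0 @ v \<and> y = [] @ pw v 0 \<and> v @ [] = v" using h by (simp add: pw_def)
      then show ?thesis by blast
    next
      case False
      then obtain i j x' y' where "us = pw v i @ x'" "y = y' @ pw v j" "x' @ y' = v"
        using Suc(1)[of us y] h by auto
      then have "x = pw v (Suc i) @ x' \<and> y = y' @ pw v j \<and> x' @ y' = v"
        using h by (simp add: pw_def)
      then show ?thesis by blast
    qed
  next
    assume h: "x @ us = v \<and> y = us @ pw v k"
    then have "x = pw v 0 @ x \<and> y = us @ pw v k \<and> x @ us = v" by (simp add: pw_def)
    then show ?case by blast
  qed
qed

lemma FSP_pow:
  assumes FB: "FSP B"
    and PB: "\<And>\<tau>. strict_mono \<tau> \<Longrightarrow> pconv (\<lambda>n. B (\<tau> n)) (mu_value sb)"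
    and K: "strict_mono K"
  shows "FSP (\<lambda>k. pw (B k) (K k))"
  unfolding FSP_def
proof (intro allI impI)
  fix \<tau> :: "nat \<Rightarrow> nat" and x y :: "nat \<Rightarrow> 'a list"
  assume tau: "strict_mono \<tau>" and xy: "\<forall>n. x n @ y n = pw (B (\<tau> n)) (K (\<tau> n))"
  have kpos: "0 < K (\<tau> (Suc n))" for n
    using seq_suble[OF sm_comp[OF K tau], of "Suc n"] by simp
  have "\<forall>n. \<exists>i j x' y'. x (Suc n) = pw (B (\<tau> (Suc n))) i @ x' \<and>
          y (Suc n) = y' @ pw (B (\<tau> (Suc n))) j \<and> x' @ y' = B (\<tau> (Suc n))"
  proof
    fix n show "\<exists>i j x' y'. x (Suc n) = pw (B (\<tau> (Suc n))) i @ x' \<and>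
          y (Suc n) = y' @ pw (B (\<tau> (Suc n))) j \<and> x' @ y' = B (\<tau> (Suc n))"
      by (rule decomp[OF kpos xy[rule_format]])
  qed
  then obtain i j x' y' where D: "\<And>n. x (Suc n) = pw (B (\<tau> (Suc n))) (i n) @ x' n \<and>
          y (Suc n) = y' n @ pw (B (\<tau> (Suc n))) (j n) \<and> x' n @ y' n = B (\<tau> (Suc n))"
    by metis
  have sSuc: "strict_mono (Suc :: nat \<Rightarrow> nat)" by (simp add: strict_mono_def)
  have tau1: "strict_mono (\<lambda>n. \<tau> (Suc n))" using sm_comp[OF tau sSuc] .
  obtain \<sigma>1 :: "nat \<Rightarrow> nat" and s1 s2 where
    \<sigma>1: "strict_mono \<sigma>1" and c1: "pconv (\<lambda>n. x' (\<sigma>1 n)) (mu_value s1)"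
    and c2: "pconv (\<lambda>n. y' (\<sigma>1 n)) (mu_value s2)"
    using FB[unfolded FSP_def, rule_format, OF tau1, of x' y'] D by metis
  define v where "v n = B (\<tau> (Suc (\<sigma>1 n)))" for n
  have cv: "pconv v (mu_value sb)"
    unfolding v_def using PB[OF sm_comp[OF tau1 \<sigma>1]] .
  obtain \<sigma>2 :: "nat \<Rightarrow> nat" and t1 where \<sigma>2: "strict_mono \<sigma>2"
    and c3: "pconv (\<lambda>n. pw (v (\<sigma>2 n)) (i (\<sigma>1 (\<sigma>2 n)))) (mu_value t1)"
    using pconv_powseq[OF cv, of "\<lambda>n. i (\<sigma>1 n)"] by blast
  define v2 where "v2 n = v (\<sigma>2 n)" for n
  have cv2: "pconv v2 (mu_value sb)" unfolding v2_def using pconv_sub[OF \<sigma>2 cv] .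
  obtain \<sigma>3 :: "nat \<Rightarrow> nat" and t2 where \<sigma>3: "strict_mono \<sigma>3"
    and c4: "pconv (\<lambda>n. pw (v2 (\<sigma>3 n)) (j (\<sigma>1 (\<sigma>2 (\<sigma>3 n))))) (mu_value t2)"
    using pconv_powseq[OF cv2, of "\<lambda>n. j (\<sigma>1 (\<sigma>2 n))"] by blast
  have s23: "strict_mono (\<lambda>n. \<sigma>2 (\<sigma>3 n))" using sm_comp[OF \<sigma>2 \<sigma>3] .
  have c3': "pconv (\<lambda>n. pw (v (\<sigma>2 (\<sigma>3 n))) (i (\<sigma>1 (\<sigma>2 (\<sigma>3 n))))) (mu_value t1)"
    using pconv_sub[OF \<sigma>3 c3] .
  have c1': "pconv (\<lambda>n. x' (\<sigma>1 (\<sigma>2 (\<sigma>3 n)))) (mu_value s1)"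
    using pconv_sub[OF s23 c1] .
  have c2': "pconv (\<lambda>n. y' (\<sigma>1 (\<sigma>2 (\<sigma>3 n)))) (mu_value s2)"
    using pconv_sub[OF s23 c2] .
  have cx: "pconv (\<lambda>n. pw (v (\<sigma>2 (\<sigma>3 n))) (i (\<sigma>1 (\<sigma>2 (\<sigma>3 n)))) @ x' (\<sigma>1 (\<sigma>2 (\<sigma>3 n))))
     (mu_value (t1 @ s1))" by (rule pconv_app[OF c3' c1'])
  have cy: "pconv (\<lambda>n. y' (\<sigma>1 (\<sigma>2 (\<sigma>3 n))) @ pw (v2 (\<sigma>3 n)) (j (\<sigma>1 (\<sigma>2 (\<sigma>3 n)))))
     (mu_value (s2 @ t2))" by (rule pconv_app[OF c2' c4])
  define \<sigma> where "\<sigma> n = Suc (\<sigma>1 (\<sigma>2 (\<sigma>3 n)))" for n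
  have s: "strict_mono \<sigma>" unfolding \<sigma>_def
    using sm_comp[OF sSuc sm_comp[OF \<sigma>1 s23]] .
  have ex: "(\<lambda>n. x (\<sigma> n)) = (\<lambda>n. pw (v (\<sigma>2 (\<sigma>3 n))) (i (\<sigma>1 (\<sigma>2 (\<sigma>3 n)))) @ x' (\<sigma>1 (\<sigma>2 (\<sigma>3 n))))"
    using D by (simp add: \<sigma>_def v_def)
  have ey: "(\<lambda>n. y (\<sigma> n)) = (\<lambda>n. y' (\<sigma>1 (\<sigma>2 (\<sigma>3 n))) @ pw (v2 (\<sigma>3 n)) (j (\<sigma>1 (\<sigma>2 (\<sigma>3 n)))))"
    using D by (simp add: \<sigma>_def v_def v2_def)
  show "\<exists>(\<sigma>::nat\<Rightarrow>nat) s s'. strict_mono \<sigma> \<and> pconv (\<lambda>n. x (\<sigma> n)) (mu_value s) \<and>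
        pconv (\<lambda>n. y (\<sigma> n)) (mu_value s')"
    apply (rule exI[of _ \<sigma>], rule exI[of _ "t1 @ s1"], rule exI[of _ "s2 @ t2"])
    unfolding ex ey using s cx cy by simp
qed


lemma FSP_apx:
  assumes ap: "approx_ok ap"
  shows "FSP (\<lambda>k. apx ap k a)"
proof (induct a)
  case (MLet x) then show ?case using FSP_let[of x] by simp
next
  case (MPow ts \<alpha>)
  have L: "FSP (\<lambda>k. apxs ap k ts)"
    using MPow
  proof (induct ts)
    case Nil then show ?case using FSP_nil by simp
  next
    case (Cons b ts)
    have h1: "FSP (\<lambda>k. apx ap k b)" using Cons.prems by simp
    have h2: "FSP (\<lambda>k. apxs ap k ts)" using Cons.hyps Cons.prems by simp
    have "FSP (\<lambda>k. apx ap k b @ apxs ap k ts)"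
      by (rule FSP_cons[OF h1 h2 pconv_apx[OF ap] pconv_apxs[OF ap]])
    then show ?case by simp
  qed
  have K: "strict_mono (ap \<alpha>)" using ap unfolding approx_ok_def by blast
  have "FSP (\<lambda>k. pw (apxs ap k ts) (ap \<alpha> k))"
    by (rule FSP_pow[OF L pconv_apxs[OF ap] K])
  then show ?case by (simp add: pw_def)
qed

lemma FSP_apxs:
  assumes ap: "approx_ok ap"
  shows "FSP (\<lambda>k. apxs ap k ts)"
proof (induct ts)
  case Nil then show ?case using FSP_nil by simp
next
  case (Cons b ts)
  have "FSP (\<lambda>k. apx ap k b @ apxs ap k ts)"
    by (rule FSP_cons[OF FSP_apx[OF ap] Cons pconv_apx[OF ap] pconv_apxs[OF ap]])
  then show ?case by simp
qed

theorem lemma2p1: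
  fixes ap :: "zhat \<Rightarrow> nat \<Rightarrow> nat"
    and t :: "('a::finite) muterm"
    and x y :: "nat \<Rightarrow> 'a list"
  assumes "approx_ok ap"
    and "factorization_seq ap t x y"
  shows "(\<exists>\<sigma> s. strict_mono \<sigma> \<and> pconv (x \<circ> \<sigma>) (mu_value s)) \<and>
         (\<exists>\<sigma> s. strict_mono \<sigma> \<and> pconv (y \<circ> \<sigma>) (mu_value s))"
proof -
  have xy: "\<forall>n. x n @ y n = apxs ap (id n) t"
    using assms(2) unfolding factorization_seq_def by simp
  have sid: "strict_mono (id :: nat \<Rightarrow> nat)" by (simp add: strict_mono_def)
  obtain \<sigma> :: "nat \<Rightarrow> nat" and s s' where
    \<sigma>: "strict_mono \<sigma>" and c1: "pconv (\<lambda>n. x (\<sigma> n)) (mu_value s)"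
    and c2: "pconv (\<lambda>n. y (\<sigma> n)) (mu_value s')"
    using FSP_apxs[OF assms(1), of t, unfolded FSP_def, rule_format, of id x y, OF sid xy[rule_format]] by metis
  have "x \<circ> \<sigma> = (\<lambda>n. x (\<sigma> n))" "y \<circ> \<sigma> = (\<lambda>n. y (\<sigma> n))" by (auto simp: comp_def)
  then show ?thesis using \<sigma> c1 c2 by metis
qed

end
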